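(* Let $R$ be a left localizable ring with $\max\mathrm{Den}_l(R)=\{S_1,\ldots,S_n\}$ (distinct), where $n\geq 2$, and let $\mathfrak{a}_i:=\mathrm{ass}(S_i)$. Then for all $i=1,\ldots,n$, $$S_i\cap\bigcap_{j\neq i}\mathfrak{a}_j=\Big(\bigcap_{j\neq i}\mathfrak{a}_j\Big)\setminus\{0\}\neq\emptyset.$$
   Context: All rings are associative with $1$. A multiplicative subset $S$ of $R$ ($1\in S$, $0\notin S$, closed under multiplication) is a left Ore set if $Sr\cap Rs\neq\emptyset$ for all $r\in R$, $s\in S$; for it, $\mathrm{ass}(S):=\{r\in R: sr=0\text{ for some } s\in S\}$. A left Ore set $S$ is a left denominator set if $rs=0$ ($r\in R$, $s\in S$) implies $tr=0$ for some $t\in S$. $\max\mathrm{Den}_l(R)$ is the set of maximal elements, under inclusion, of the set of left denominator sets of $R$. A ring $R$ is left localizable if every nonzero $r\in R$ lies in some left denominator set. *)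

theory Defs
  imports Main
begin

definition mult_subset :: "'a::ring_1 set \<Rightarrow> bool" where
  "mult_subset S \<longleftrightarrow> 1 \<in> S \<and> 0 \<notin> S \<and> (\<forall>a\<in>S. \<forall>b\<in>S. a * b \<in> S)"

definition left_ore :: "'a::ring_1 set \<Rightarrow> bool" where
  "left_ore S \<longleftrightarrow> mult_subset S \<and>
     (\<forall>r. \<forall>s\<in>S. \<exists>s'\<in>S. \<exists>r'. s' * r = r' * s)"

definition ass :: "'a::ring_1 set \<Rightarrow> 'a set" where
  "ass S = {r. \<exists>s\<in>S. s * r = 0}"

definition left_den :: "'a::ring_1 set \<Rightarrow> bool" where
  "left_den S \<longleftrightarrow> left_ore S \<and>
     (\<forall>r. \<forall>s\<in>S. r * s = 0 \<longrightarrow> (\<exists>t\<in>S. t * r = 0))"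

definition maxDen_l :: "'a::ring_1 set set" where
  "maxDen_l = {S. left_den S \<and> (\<forall>T. left_den T \<longrightarrow> S \<subseteq> T \<longrightarrow> T = S)}"

definition left_localizable :: "'a::ring_1 itself \<Rightarrow> bool" where
  "left_localizable _ \<longleftrightarrow> (\<forall>r::'a. r \<noteq> 0 \<longrightarrow> (\<exists>S. left_den S \<and> r \<in> S))"

end

theory Submission
  imports Defs
begin

lemma ass_left:
  assumes "left_ore S" "r \<in> ass S"
  shows "x * r \<in> ass S"
proof -
  from assms(2) obtain s where s: "s \<in> S" "s * r = 0" by (auto simp: ass_def)
  from assms(1) s(1) obtain s' r' where "s' \<in> S" "s' * x = r' * s"
    unfolding left_ore_def by blast
  then have "s' * (x * r) = 0" using s by (metis mult.assoc mult_zero_right)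
  with \<open>s' \<in> S\<close> show ?thesis by (auto simp: ass_def)
qed

lemma ass_right:
  assumes "r \<in> ass S"
  shows "r * x \<in> ass S"
proof -
  from assms obtain s where s: "s \<in> S" "s * r = 0" by (auto simp: ass_def)
  then have "s * (r * x) = 0" by (metis mult.assoc mult_zero_left)
  with s show ?thesis by (auto simp: ass_def)
qed

lemma S_ass_disj:
  assumes "mult_subset S" "x \<in> S" "x \<in> ass S"
  shows False
proof -
  from assms(3) obtain s where "s \<in> S" "s * x = 0" by (auto simp: ass_def)
  moreover have "s * x \<in> S" using assms(1,2) \<open>s \<in> S\<close> unfolding mult_subset_def by blast
  ultimately show False using assms(1) unfolding mult_subset_def by simp
qed

lemma den_ass:
  assumes "left_den S" "t * w = 0" "w \<in> S"
  shows "t \<in> ass S"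
proof -
  from assms(1,3) have "\<forall>r. r * w = 0 \<longrightarrow> (\<exists>t\<in>S. t * r = 0)" unfolding left_den_def by blast
  with assms(2) show ?thesis unfolding ass_def by blast
qed

lemma ld_ms: "left_den S \<Longrightarrow> mult_subset S"
  unfolding left_den_def left_ore_def by (elim conjE)

lemma ld_ore: "left_den S \<Longrightarrow> s \<in> S \<Longrightarrow> \<exists>s'\<in>S. \<exists>r'. s' * r = r' * s"
  unfolding left_den_def left_ore_def by (elim conjE) (erule allE, erule ballE, assumption, simp)

lemma ld_den: "left_den S \<Longrightarrow> s \<in> S \<Longrightarrow> r * s = 0 \<Longrightarrow> \<exists>t\<in>S. t * r = 0"
  unfolding left_den_def by (elim conjE) (erule allE, erule ballE, erule mp, assumption, simp)

lemma ld_lore: "left_den S \<Longrightarrow> left_ore S"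
  unfolding left_den_def by (elim conjE)

lemma ms_1: "mult_subset S \<Longrightarrow> 1 \<in> S" unfolding mult_subset_def by simp
lemma ms_0: "mult_subset S \<Longrightarrow> 0 \<notin> S" unfolding mult_subset_def by simp
lemma ms_mul: "mult_subset S \<Longrightarrow> a \<in> S \<Longrightarrow> b \<in> S \<Longrightarrow> a * b \<in> S" unfolding mult_subset_def by simp

lemma chain_union_den:
  assumes "C \<noteq> {}" "\<forall>X\<in>C. left_den X" "\<forall>A\<in>C. \<forall>B\<in>C. A \<subseteq> B \<or> B \<subseteq> A"
  shows "left_den (\<Union>C)"
proof -
  from assms(1) obtain X where X: "X \<in> C" by blast
  have 1: "1 \<in> \<Union>C" using X assms(2) ms_1 ld_ms by blast
  have 0: "0 \<notin> \<Union>C" using assms(2) ms_0 ld_ms by blast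
  have m: "\<forall>a\<in>\<Union>C. \<forall>b\<in>\<Union>C. a * b \<in> \<Union>C"
  proof (intro ballI)
    fix a b assume "a \<in> \<Union>C" "b \<in> \<Union>C"
    then obtain A B where AB: "A \<in> C" "B \<in> C" "a \<in> A" "b \<in> B" by blast
    from assms(3) AB(1,2) have "A \<subseteq> B \<or> B \<subseteq> A" by blast
    then show "a * b \<in> \<Union>C"
    proof
      assume "A \<subseteq> B"
      then have "a * b \<in> B" using AB assms(2) ms_mul ld_ms by blast
      with AB show ?thesis by blast
    next
      assume "B \<subseteq> A"
      then have "a * b \<in> A" using AB assms(2) ms_mul ld_ms by blast
      with AB show ?thesis by blast
    qed
  qed
  have ms: "mult_subset (\<Union>C)" unfolding mult_subset_def using 1 0 m by (intro conjI)
  have ore: "\<forall>r. \<forall>s\<in>\<Union>C. \<exists>s'\<in>\<Union>C. \<exists>r'. s' * r = r' * s"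
  proof (intro allI ballI)
    fix r s assume "s \<in> \<Union>C"
    then obtain Y where "Y \<in> C" "s \<in> Y" by blast
    with assms(2) ld_ore obtain s' r' where "s' \<in> Y" "s' * r = r' * s" by blast
    with \<open>Y \<in> C\<close> show "\<exists>s'\<in>\<Union>C. \<exists>r'. s' * r = r' * s" by blast
  qed
  have den: "\<forall>r. \<forall>s\<in>\<Union>C. r * s = 0 \<longrightarrow> (\<exists>t\<in>\<Union>C. t * r = 0)"
  proof (intro allI ballI impI)
    fix r s assume "s \<in> \<Union>C" "r * s = 0"
    then obtain Y where "Y \<in> C" "s \<in> Y" by blast
    with assms(2) ld_den \<open>r * s = 0\<close> obtain t where "t \<in> Y" "t * r = 0" by blast
    with \<open>Y \<in> C\<close> show "\<exists>t\<in>\<Union>C. t * r = 0" by blast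
  qed
  show ?thesis unfolding left_den_def left_ore_def using ms ore den by (intro conjI)
qed

lemma exists_max:
  fixes T :: "'a::ring_1 set"
  assumes "left_den T"
  shows "\<exists>M\<in>maxDen_l. T \<subseteq> M"
proof -
  let ?A = "{X. left_den X \<and> T \<subseteq> X}"
  have "\<forall>C\<in>chains ?A. \<exists>U\<in>?A. \<forall>X\<in>C. X \<subseteq> U"
  proof
    fix C assume C: "C \<in> chains ?A"
    show "\<exists>U\<in>?A. \<forall>X\<in>C. X \<subseteq> U"
    proof (cases "C = {}")
      case True
      then show ?thesis using assms by auto
    next
      case False
      from C have "C \<subseteq> ?A" "\<forall>A\<in>C. \<forall>B\<in>C. A \<subseteq> B \<or> B \<subseteq> A"
        unfolding chains_def chain_subset_def by auto
      then have "left_den (\<Union>C)" using chain_union_den[OF False] by auto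
      moreover have "T \<subseteq> \<Union>C" using False \<open>C \<subseteq> ?A\<close> by auto
      ultimately show ?thesis by blast
    qed
  qed
  from Zorn_Lemma2[OF this] obtain M where M: "M \<in> ?A" "\<forall>X\<in>?A. M \<subseteq> X \<longrightarrow> X = M" by blast
  have "M \<in> maxDen_l"
    unfolding maxDen_l_def using M by auto
  with M show ?thesis by blast
qed

inductive_set gen :: "'a::ring_1 set \<Rightarrow> 'a set \<Rightarrow> 'a set" for A B where
  one: "1 \<in> gen A B"
| inA: "a \<in> A \<Longrightarrow> a \<in> gen A B"
| inB: "b \<in> B \<Longrightarrow> b \<in> gen A B"
| mul: "u \<in> gen A B \<Longrightarrow> v \<in> gen A B \<Longrightarrow> u * v \<in> gen A B"

lemma gen_ore:
  assumes "left_ore A" "left_ore B" "u \<in> gen A B"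
  shows "\<forall>r. \<exists>u'\<in>gen A B. \<exists>r'. u' * r = r' * u"
  using assms(3)
proof (induction rule: gen.induct)
  case one
  then show ?case by (metis gen.one mult_1_left mult_1_right)
next
  case (inA a)
  then show ?case using assms(1) unfolding left_ore_def by (meson gen.inA)
next
  case (inB b)
  then show ?case using assms(2) unfolding left_ore_def by (meson gen.inB)
next
  case (mul u v)
  show ?case
  proof
    fix r
    from mul.IH(2) obtain u2 r2 where "u2 \<in> gen A B" "u2 * r = r2 * v" by blast
    moreover from mul.IH(1) obtain u1 r1 where "u1 \<in> gen A B" "u1 * r2 = r1 * u" by blast
    ultimately have "(u1 * u2) * r = r1 * (u * v)" "u1 * u2 \<in> gen A B"
      by (auto simp: mult.assoc intro: gen.mul) (metis mult.assoc)
    then show "\<exists>u'\<in>gen A B. \<exists>r'. u' * r = r' * (u * v)" by blast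
  qed
qed

lemma gen_den:
  assumes "left_den A" "left_den B" "u \<in> gen A B"
  shows "\<forall>r. r * u = 0 \<longrightarrow> (\<exists>t\<in>gen A B. t * r = 0)"
  using assms(3)
proof (induction rule: gen.induct)
  case one
  then show ?case using gen.one by fastforce
next
  case (inA a)
  then show ?case using assms(1) unfolding left_den_def by (meson gen.inA)
next
  case (inB b)
  then show ?case using assms(2) unfolding left_den_def by (meson gen.inB)
next
  case (mul u v)
  show ?case
  proof (intro allI impI)
    fix r assume "r * (u * v) = 0"
    then have "(r * u) * v = 0" by (simp add: mult.assoc)
    with mul.IH(2) obtain t2 where "t2 \<in> gen A B" "t2 * (r * u) = 0" by blast
    then have "(t2 * r) * u = 0" by (simp add: mult.assoc)
    with mul.IH(1) obtain t1 where "t1 \<in> gen A B" "t1 * (t2 * r) = 0" by blast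
    with \<open>t2 \<in> gen A B\<close> show "\<exists>t\<in>gen A B. t * r = 0"
      by (metis gen.mul mult.assoc)
  qed
qed

lemma gen_inj:
  assumes "\<forall>a\<in>A. \<forall>w\<in>C. a * w = 0 \<longrightarrow> w = 0"
    "\<forall>b\<in>B. \<forall>w\<in>C. b * w = 0 \<longrightarrow> w = 0"
    "\<forall>x w. w \<in> C \<longrightarrow> x * w \<in> C"
    "u \<in> gen A B"
  shows "\<forall>w\<in>C. u * w = 0 \<longrightarrow> w = 0"
  using assms(4)
proof (induction rule: gen.induct)
  case one
  then show ?case by simp
next
  case (inA a)
  then show ?case using assms(1) by blast
next
  case (inB b)
  then show ?case using assms(2) by blast
next
  case (mul u v)
  then show ?case using assms(3) by (metis mult.assoc)
qed

lemma gen_left_den: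
  assumes "left_den A" "left_den B" "0 \<notin> gen A B"
  shows "left_den (gen A B)"
proof -
  have "mult_subset (gen A B)" unfolding mult_subset_def using assms(3)
    by (auto intro: gen.one gen.mul)
  then show ?thesis unfolding left_den_def left_ore_def
    using gen_ore[of A B] gen_den[OF assms(1,2)] assms(1,2)
    unfolding left_den_def by blast
qed

lemma prod_trick:
  assumes "mult_subset T" "finite N" "\<forall>j\<in>N. T \<inter> ass (F j) \<noteq> {}" "\<forall>j\<in>N. left_ore (F j)"
  shows "\<exists>y\<in>T. \<forall>j\<in>N. y \<in> ass (F j)"
  using assms(2,3,4)
proof (induction N rule: finite_induct)
  case empty
  then show ?case using assms(1) unfolding mult_subset_def by blast
next
  case (insert j N)
  then obtain y where y: "y \<in> T" "\<forall>j\<in>N. y \<in> ass (F j)" by auto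
  from insert obtain x where x: "x \<in> T" "x \<in> ass (F j)" by blast
  have "y * x \<in> T" using x y assms(1) unfolding mult_subset_def by blast
  moreover have "y * x \<in> ass (F j)" using ass_left insert.prems(2) x by blast
  moreover have "\<forall>j\<in>N. y * x \<in> ass (F j)" using y ass_right by blast
  ultimately show ?case by blast
qed

theorem corollary3p6:
  fixes S :: "nat \<Rightarrow> 'a::ring_1 set" and n :: nat
  assumes "left_localizable TYPE('a)"
    and "n \<ge> 2"
    and "inj_on S {1..n}"
    and "maxDen_l = S ` {1..n}"
  shows "\<forall>i\<in>{1..n}.
           S i \<inter> (\<Inter>j\<in>{1..n} - {i}. ass (S j)) = (\<Inter>j\<in>{1..n} - {i}. ass (S j)) - {0}
         \<and> (\<Inter>j\<in>{1..n} - {i}. ass (S j)) - {0} \<noteq> {}"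
proof -
  have inM: "S l \<in> maxDen_l" if "l \<in> {1..n}" for l unfolding assms(4) using that by (rule imageI)
  have den: "left_den (S l)" if "l \<in> {1..n}" for l using inM[OF that] unfolding maxDen_l_def by simp
  have ms: "mult_subset (S l)" if "l \<in> {1..n}" for l using den[OF that] by (rule ld_ms)
  have ore: "left_ore (S l)" if "l \<in> {1..n}" for l using den[OF that] by (rule ld_lore)
  have maxl: "T = S l" if "l \<in> {1..n}" "left_den T" "S l \<subseteq> T" for l T
    using inM[OF that(1)] that(2,3) unfolding maxDen_l_def by simp
  have F2: "\<exists>l\<in>{1..n}. w \<in> S l" if "w \<noteq> 0" for w :: 'a
  proof -
    from assms(1) that obtain T where "left_den T" "w \<in> T" unfolding left_localizable_def by blast
    from exists_max[OF this(1)] obtain M where "M \<in> maxDen_l" "T \<subseteq> M" by blast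
    with assms(4) \<open>w \<in> T\<close> show "\<exists>l\<in>{1..n}. w \<in> S l" by blast
  qed
  define N where "N i = {j \<in> {1..n}. S i \<inter> ass (S j) \<noteq> {}}" for i
  have fin: "finite (N i)" for i unfolding N_def by simp
  have Nsub: "N i \<subseteq> {1..n}" for i unfolding N_def by blast
  have Nne: "\<forall>j\<in>N i. S i \<inter> ass (S j) \<noteq> {}" for i unfolding N_def by blast
  have Nore: "\<forall>j\<in>N i. left_ore (S j)" for i using Nsub ore by blast
  have Y: "\<exists>y\<in>S i. \<forall>j\<in>N i. y \<in> ass (S j)" if "i \<in> {1..n}" for i
    by (rule prod_trick[OF ms[OF that] fin[of i] Nne Nore])
  have key: "S i \<inter> ass (S k) \<noteq> {}" if i: "i \<in> {1..n}" and k: "k \<in> {1..n}" and "k \<noteq> i" for i k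
  proof
    assume disj: "S i \<inter> ass (S k) = {}"
    from Y[OF i] obtain yi where yi: "yi \<in> S i" "\<forall>j\<in>N i. yi \<in> ass (S j)" by blast
    from Y[OF k] obtain yk where yk: "yk \<in> S k" "\<forall>j\<in>N k. yk \<in> ass (S j)" by blast
    define C where "C = {w. \<forall>j\<in>N i \<union> N k. w \<in> ass (S j)}"
    have Cl: "\<forall>x w. w \<in> C \<longrightarrow> x * w \<in> C"
    proof (intro allI impI)
      fix x w assume "w \<in> C"
      show "x * w \<in> C" unfolding C_def
      proof (intro CollectI ballI)
        fix j assume j: "j \<in> N i \<union> N k"
        then have "j \<in> {1..n}" using Nsub by blast
        moreover have "w \<in> ass (S j)" using \<open>w \<in> C\<close> j unfolding C_def by blast
        ultimately show "x * w \<in> ass (S j)" using ass_left ore by blast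
      qed
    qed
    have injgen: "\<forall>a\<in>S m. \<forall>w\<in>C. a * w = 0 \<longrightarrow> w = 0" if "m \<in> {1..n}" "N m \<subseteq> N i \<union> N k" for m
    proof (intro ballI impI)
      fix a w assume a: "a \<in> S m" and w: "w \<in> C" and aw: "a * w = 0"
      show "w = 0"
      proof (rule ccontr)
        assume "w \<noteq> 0"
        with F2 obtain l where l: "l \<in> {1..n}" "w \<in> S l" by blast
        have "a \<in> ass (S l)" using den_ass[OF den[OF l(1)] aw l(2)] .
        then have "l \<in> N m" using a l(1) unfolding N_def by blast
        then have "w \<in> ass (S l)" using w that(2) unfolding C_def by blast
        then show False using S_ass_disj[OF ms[OF l(1)] l(2)] by blast
      qed
    qed
    have w0C: "yi * yk \<in> C" unfolding C_def
    proof (intro CollectI ballI)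
      fix j assume j: "j \<in> N i \<union> N k"
      then show "yi * yk \<in> ass (S j)"
      proof
        assume "j \<in> N i"
        then show ?thesis using yi(2) ass_right by blast
      next
        assume "j \<in> N k"
        then have "j \<in> {1..n}" using Nsub by blast
        with \<open>j \<in> N k\<close> show ?thesis using yk(2) ass_left ore by blast
      qed
    qed
    have w0: "yi * yk \<noteq> 0"
    proof
      assume "yi * yk = 0"
      then have "yi \<in> ass (S k)" using den_ass[OF den[OF k] _ yk(1)] by blast
      with disj yi(1) show False by blast
    qed
    have "0 \<notin> gen (S i) (S k)"
    proof
      assume z: "0 \<in> gen (S i) (S k)"
      have "\<forall>w\<in>C. 0 * w = 0 \<longrightarrow> w = 0"
        using gen_inj[OF injgen[OF i] injgen[OF k] Cl z] by blast
      with w0C w0 show False by simp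
    qed
    then have ld: "left_den (gen (S i) (S k))" using gen_left_den den i k by blast
    have "gen (S i) (S k) = S i" using maxl[OF i ld] by (meson gen.inA subsetI)
    moreover have "gen (S i) (S k) = S k" using maxl[OF k ld] by (meson gen.inB subsetI)
    ultimately have "S i = S k" by simp
    from inj_onD[OF assms(3) this i k] \<open>k \<noteq> i\<close> show False by simp
  qed
  show ?thesis
  proof
    fix i assume i: "i \<in> {1..n}"
    let ?A = "\<Inter>j\<in>{1..n} - {i}. ass (S j)"
    have 1: "S i \<inter> ?A = ?A - {0}"
    proof
      show "S i \<inter> ?A \<subseteq> ?A - {0}" using ms_0[OF ms[OF i]] by blast
      show "?A - {0} \<subseteq> S i \<inter> ?A"
      proof
        fix x assume x: "x \<in> ?A - {0}"
        then have "x \<noteq> 0" by blast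
        with F2 obtain l where l: "l \<in> {1..n}" "x \<in> S l" by blast
        have "l = i"
        proof (rule ccontr)
          assume "l \<noteq> i"
          with x l have "x \<in> ass (S l)" by blast
          with S_ass_disj[OF ms[OF l(1)] l(2)] show False by blast
        qed
        with x l show "x \<in> S i \<inter> ?A" by blast
      qed
    qed
    from Y[OF i] obtain y where y: "y \<in> S i" "\<forall>j\<in>N i. y \<in> ass (S j)" by blast
    have "j \<in> N i" if "j \<in> {1..n} - {i}" for j using key[OF i, of j] that unfolding N_def by blast
    with y have "y \<in> ?A" by blast
    moreover have "y \<noteq> 0" using y(1) ms_0[OF ms[OF i]] by blast
    ultimately have "?A - {0} \<noteq> {}" by blast
    with 1 show "S i \<inter> ?A = ?A - {0} \<and> ?A - {0} \<noteq> {}" by blast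
  qed
qed

end
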